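(* For $n\ge 1$, the number of shallow $132$-avoiding involutions in $S_n$ (permutations with $\pi=\pi^{-1}$) equals $F_{n+1}$.
   Context: For $\pi\in S_n$: $D(\pi)=\sum_{i}|\pi_i-i|$, $I(\pi)$ is the number of inversions, $T(\pi)=n-\mathrm{cyc}(\pi)$ with $\mathrm{cyc}$ the number of cycles in the disjoint cycle decomposition; $\pi$ is shallow if $I(\pi)+T(\pi)=D(\pi)$. A permutation avoids a pattern $\sigma$ if it has no subsequence order-isomorphic to $\sigma$. $F_m$ are the Fibonacci numbers with $F_1=F_2=1$. *)

theory Defs
  imports "HOL-Combinatorics.Permutations" "HOL-Number_Theory.Fib"
begin

text \<open>Permutations of S_n are functions p with p permutes {1..n}.\<close>

definition total_disp :: "nat \<Rightarrow> (nat \<Rightarrow> nat) \<Rightarrow> int" where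
  "total_disp n p = (\<Sum>i\<in>{1..n}. \<bar>int (p i) - int i\<bar>)"

definition inversions :: "nat \<Rightarrow> (nat \<Rightarrow> nat) \<Rightarrow> nat" where
  "inversions n p = card {(i, j). i \<in> {1..n} \<and> j \<in> {1..n} \<and> i < j \<and> p i > p j}"

definition cyc_of :: "(nat \<Rightarrow> nat) \<Rightarrow> nat \<Rightarrow> nat set" where
  "cyc_of p i = {j. \<exists>k. (p ^^ k) i = j}"

definition num_cycles :: "nat \<Rightarrow> (nat \<Rightarrow> nat) \<Rightarrow> nat" where
  "num_cycles n p = card (cyc_of p ` {1..n})"

definition reflength :: "nat \<Rightarrow> (nat \<Rightarrow> nat) \<Rightarrow> int" where
  "reflength n p = int n - int (num_cycles n p)"

definition shallow :: "nat \<Rightarrow> (nat \<Rightarrow> nat) \<Rightarrow> bool" where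
  "shallow n p \<longleftrightarrow> int (inversions n p) + reflength n p = total_disp n p"

definition avoids_132 :: "nat \<Rightarrow> (nat \<Rightarrow> nat) \<Rightarrow> bool" where
  "avoids_132 n p \<longleftrightarrow> \<not> (\<exists>i j k. 1 \<le> i \<and> i < j \<and> j < k \<and> k \<le> n \<and> p i < p k \<and> p k < p j)"

definition involution :: "(nat \<Rightarrow> nat) \<Rightarrow> bool" where
  "involution p \<longleftrightarrow> p \<circ> p = id"

end

theory Submission
  imports Defs
begin

definition DD :: "nat \<Rightarrow> nat \<Rightarrow> (nat \<Rightarrow> nat) \<Rightarrow> int" where
  "DD a n p = (\<Sum>i\<in>{a..<a+n}. \<bar>int (p i) - int i\<bar>)"
definition II :: "nat \<Rightarrow> nat \<Rightarrow> (nat \<Rightarrow> nat) \<Rightarrow> nat" where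
  "II a n p = card {(i,j). i \<in> {a..<a+n} \<and> j \<in> {a..<a+n} \<and> i < j \<and> p j < p i}"
definition CC :: "nat \<Rightarrow> nat \<Rightarrow> (nat \<Rightarrow> nat) \<Rightarrow> nat" where
  "CC a n p = card {i\<in>{a..<a+n}. p i < i}"
definition AV :: "nat \<Rightarrow> nat \<Rightarrow> (nat \<Rightarrow> nat) \<Rightarrow> bool" where
  "AV a n p \<longleftrightarrow> \<not>(\<exists>i j k. a \<le> i \<and> i < j \<and> j < k \<and> k < a+n \<and> p i < p k \<and> p k < p j)"
definition invo :: "(nat \<Rightarrow> nat) \<Rightarrow> bool" where
  "invo p \<longleftrightarrow> (\<forall>x. p (p x) = x)"
definition supp :: "(nat \<Rightarrow> nat) \<Rightarrow> nat set \<Rightarrow> bool" where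
  "supp p S \<longleftrightarrow> (\<forall>x. x \<notin> S \<longrightarrow> p x = x)"
definition OK :: "nat \<Rightarrow> nat \<Rightarrow> (nat \<Rightarrow> nat) \<Rightarrow> bool" where
  "OK a n p \<longleftrightarrow> invo p \<and> supp p {a..<a+n} \<and> AV a n p \<and> DD a n p = int (II a n p) + int (CC a n p)"

lemma invoD: "invo p \<Longrightarrow> p (p x) = x" by (simp add: invo_def)

lemma inS: "invo p \<Longrightarrow> supp p S \<Longrightarrow> x \<in> S \<Longrightarrow> p x \<in> S"
  unfolding invo_def supp_def by metis

lemma inv_inj: "invo p \<Longrightarrow> inj p"
  unfolding invo_def inj_def by metis

lemma finite_pairs: "finite {(i,j). i \<in> {a..<b::nat} \<and> j \<in> {a..<b} \<and> P i j}"
  by (rule finite_subset[of _ "{a..<b} \<times> {a..<b}"]) auto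

lemma OK_id: "OK a n id"
proof -
  have "II a n id = 0" unfolding II_def by (subst card_eq_0_iff) auto
  moreover have "CC a n id = 0" unfolding CC_def by (subst card_eq_0_iff) auto
  moreover have "DD a n id = 0" unfolding DD_def by simp
  ultimately show ?thesis
    unfolding OK_def invo_def supp_def AV_def by auto
qed

lemma fix_lemma:
  assumes iv: "invo p" and sp: "supp p {a..<Suc (a+n)}" and pt: "p (a+n) = a+n"
  shows "supp p {a..<a+n}" "DD a (Suc n) p = DD a n p" "II a (Suc n) p = II a n p"
    "CC a (Suc n) p = CC a n p" "AV a (Suc n) p \<longleftrightarrow> AV a n p"
proof -
  have rng: "\<And>i. i \<in> {a..<Suc (a+n)} \<Longrightarrow> p i \<in> {a..<Suc (a+n)}" using inS[OF iv sp] by blast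
  have ne: "\<And>i. i \<noteq> a+n \<Longrightarrow> p i \<noteq> a+n" using iv pt by (metis invoD)
  show "supp p {a..<a+n}" using sp pt unfolding supp_def
    by (metis atLeastLessThan_iff less_Suc_eq)
  have S: "{a..<a + Suc n} = insert (a+n) {a..<a+n}" by auto
  show "DD a (Suc n) p = DD a n p" unfolding DD_def S by (simp add: pt)
  have "{(i,j). i \<in> {a..<a+Suc n} \<and> j \<in> {a..<a+Suc n} \<and> i < j \<and> p j < p i}
     = {(i,j). i \<in> {a..<a+n} \<and> j \<in> {a..<a+n} \<and> i < j \<and> p j < p i}"
  proof (intro set_eqI iffI; clarsimp)
    fix i j assume "a \<le> i" "i < j" "j < Suc (a+n)" "p j < p i"
    moreover have "p i < Suc (a+n)" using rng \<open>a \<le> i\<close> \<open>i < j\<close> \<open>j < Suc (a+n)\<close> by auto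
    ultimately show "j < a + n" using pt by (metis less_SucE not_less_iff_gr_or_eq)
  qed
  then show "II a (Suc n) p = II a n p" unfolding II_def by simp
  have "{i\<in>{a..<a+Suc n}. p i < i} = {i\<in>{a..<a+n}. p i < i}" using pt by (auto simp: less_Suc_eq)
  then show "CC a (Suc n) p = CC a n p" unfolding CC_def by simp
  show "AV a (Suc n) p \<longleftrightarrow> AV a n p"
  proof
    assume "AV a (Suc n) p" then show "AV a n p" unfolding AV_def by auto
  next
    assume A: "AV a n p"
    show "AV a (Suc n) p" unfolding AV_def
    proof clarify
      fix i j k assume h: "a \<le> i" "i < j" "j < k" "k < a + Suc n" "p i < p k" "p k < p j"
      have "p j < Suc (a+n)" using rng h by auto
      then have "k \<noteq> a+n" using h pt by auto
      then show False using A h unfolding AV_def by auto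
    qed
  qed
qed

lemma step_lemma:
  assumes iv: "invo p" and sp: "supp p {a..<Suc (a+n)}" and pt: "p (a+n) \<noteq> a+n"
  defines "t \<equiv> a+n"
  defines "k \<equiv> p t"
  defines "q \<equiv> p(k:=k, t:=t)"
  shows "a \<le> k" "k < t" "p k = t" "invo q" "supp q {a..<a+n}"
    "int (II a (Suc n) p) + int (CC a (Suc n) p) + int (card {i\<in>{a..<k}. k < p i}) + DD a n q
       \<le> DD a (Suc n) p + int (II a n q) + int (CC a n q)"
proof -
  have rng: "\<And>i. i \<in> {a..<Suc t} \<Longrightarrow> p i \<in> {a..<Suc t}" using inS[OF iv sp] unfolding t_def by blast
  have pk: "p k = t" using iv k_def invoD by blast
  show "p k = t" by (rule pk)
  have kt: "k \<noteq> t" using pt t_def k_def by simp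
  have kin: "k \<in> {a..<Suc t}" using rng k_def t_def by auto
  show ak: "a \<le> k" using kin by auto
  show kt2: "k < t" using kin kt by auto
  have qo: "\<And>i. i \<noteq> k \<Longrightarrow> i \<noteq> t \<Longrightarrow> q i = p i" using q_def by simp
  have qk: "q k = k" "q t = t" using q_def kt by auto
  have pne: "\<And>i. i \<noteq> k \<Longrightarrow> p i \<noteq> t" using iv pk by (metis invoD)
  have pne2: "\<And>i. i \<noteq> t \<Longrightarrow> p i \<noteq> k" using iv k_def by (metis invoD)
  show "invo q" unfolding invo_def
  proof
    fix x show "q (q x) = x"
      by (cases "x = k"; cases "x = t") (auto simp: qk qo pne pne2 invoD[OF iv])
  qed
  show sq: "supp q {a..<a+n}" unfolding supp_def
  proof clarify
    fix x assume "x \<notin> {a..<a+n}"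
    then show "q x = x" using sp qk kin qo t_def unfolding supp_def
      by (cases "x = t") auto
  qed
  have S: "{a..<a + Suc n} = insert t {a..<t}" "{a..<a+n} = {a..<t}" using t_def by auto
  have k1: "k \<in> {a..<t}" using ak kt2 by auto
  have "DD a (Suc n) p = \<bar>int (p t) - int t\<bar> + (\<Sum>i\<in>{a..<t}. \<bar>int (p i) - int i\<bar>)"
    unfolding DD_def S by simp
  also have "(\<Sum>i\<in>{a..<t}. \<bar>int (p i) - int i\<bar>) = \<bar>int (p k) - int k\<bar> + (\<Sum>i\<in>{a..<t}-{k}. \<bar>int (p i) - int i\<bar>)"
    using k1 by (simp add: sum.remove)
  also have "(\<Sum>i\<in>{a..<t}-{k}. \<bar>int (p i) - int i\<bar>) = (\<Sum>i\<in>{a..<t}-{k}. \<bar>int (q i) - int i\<bar>)"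
    by (rule sum.cong) (auto simp: qo)
  finally have D1: "DD a (Suc n) p = 2 * (int t - int k) + (\<Sum>i\<in>{a..<t}-{k}. \<bar>int (q i) - int i\<bar>)"
    using pk kt2 k_def by simp
  have "DD a n q = \<bar>int (q k) - int k\<bar> + (\<Sum>i\<in>{a..<t}-{k}. \<bar>int (q i) - int i\<bar>)"
    unfolding DD_def S using k1 by (simp add: sum.remove)
  then have D: "DD a (Suc n) p = DD a n q + 2 * (int t - int k)" using D1 qk by simp
  have "{i\<in>{a..<a + Suc n}. p i < i} = insert t {i\<in>{a..<a+n}. q i < i}"
  proof (rule set_eqI)
    fix i show "i \<in> {i\<in>{a..<a + Suc n}. p i < i} \<longleftrightarrow> i \<in> insert t {i\<in>{a..<a+n}. q i < i}"
    proof (cases "i = t")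
      case True then show ?thesis using S k_def kt2 qk by auto
    next
      case False
      show ?thesis
      proof (cases "i = k")
        case True then show ?thesis using S pk kt2 qk False by auto
      next
        case F2: False then show ?thesis using S qo[OF F2 False] False by auto
      qed
    qed
  qed
  then have C: "CC a (Suc n) p = CC a n q + 1" unfolding CC_def by (simp add: S)
  define R where "R = {a..<t} - {k}"
  define X where "X = {(i,j). i \<in> R \<and> j \<in> R \<and> i < j \<and> p j < p i}"
  define B where "B = {i\<in>R. k < p i}"
  have finR: "finite R" unfolding R_def by simp
  have finB: "finite B" using finR unfolding B_def by (rule rev_finite_subset) blast
  have finX: "finite X"
  proof (rule finite_subset[of _ "R \<times> R"])
    show "X \<subseteq> R \<times> R" unfolding X_def by blast
    show "finite (R \<times> R)" using finR by blast
  qed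
  have "{(i,j). i \<in> {a..<a+Suc n} \<and> j \<in> {a..<a+Suc n} \<and> i < j \<and> p j < p i}
      \<subseteq> X \<union> (Pair k ` {k<..t}) \<union> ((\<lambda>i. (i,t)) ` B)"
  proof (rule subsetI)
    fix x assume hx: "x \<in> {(i,j). i \<in> {a..<a+Suc n} \<and> j \<in> {a..<a+Suc n} \<and> i < j \<and> p j < p i}"
    obtain i j where xij: "x = (i,j)" by fastforce
    show "x \<in> X \<union> (Pair k ` {k<..t}) \<union> ((\<lambda>i. (i,t)) ` B)"
    proof (rule ccontr)
    assume hn: "x \<notin> X \<union> (Pair k ` {k<..t}) \<union> ((\<lambda>i. (i,t)) ` B)"
    have h1: "i \<in> {a..<a+Suc n}" "j \<in> {a..<a+Suc n}" "i < j" "p j < p i"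
      using hx xij by simp_all
    have h2: "(i, j) \<notin> Pair k ` {k<..t}" "(i,j) \<notin> (\<lambda>i. (i,t)) ` B" using hn xij by blast+
    note h = h1 h2
    have ik: "i \<noteq> k" using h by (auto simp: t_def)
    have ilt: "a \<le> i" "i < j" "j \<le> t" using h by (auto simp: t_def)
    have jt: "j \<noteq> t"
    proof
      assume jt: "j = t"
      then have "i \<in> B" using h ik ilt unfolding B_def R_def k_def by auto
      then show False using h(6) jt by blast
    qed
    have jk: "j \<noteq> k"
    proof
      assume "j = k"
      then have "t < p i" using h(4) pk by simp
      moreover have "p i \<in> {a..<Suc t}" using rng ilt by simp
      ultimately show False by simp
    qed
    have "(i,j) \<in> X" unfolding X_def R_def using ilt ik jt jk h(4) by auto
    then show False using hn xij by blast
    qed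
  qed
  then have "II a (Suc n) p \<le> card (X \<union> (Pair k ` {k<..t}) \<union> ((\<lambda>i. (i,t)) ` B))"
    unfolding II_def by (intro card_mono) (auto simp: finX finB)
  also have "\<dots> \<le> card X + card (Pair k ` {k<..t}) + card ((\<lambda>i. (i,t)) ` B)"
    using card_Un_le[of "X \<union> (Pair k ` {k<..t})" "(\<lambda>i. (i,t)) ` B"] card_Un_le[of X "Pair k ` {k<..t}"]
    by linarith
  also have "card (Pair k ` {k<..t}) \<le> t - k" using card_image_le[of "{k<..t}" "Pair k"] by simp
  also have "card ((\<lambda>i. (i,t)) ` B) \<le> card B" by (rule card_image_le[OF finB])
  also have "card B \<le> t - k - 1"
  proof -
    have "card B = card (p ` B)" by (rule card_image[symmetric, OF inj_on_subset[OF inv_inj[OF iv] subset_UNIV]])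
    also have "p ` B \<subseteq> {k<..<t}"
    proof
      fix y assume "y \<in> p ` B"
      then obtain i where i: "i \<in> B" "y = p i" by auto
      have "i \<in> {a..<Suc t}" using i unfolding B_def R_def by auto
      then have "p i \<in> {a..<Suc t}" using rng by blast
      moreover have "p i \<noteq> t" using pne i unfolding B_def R_def by auto
      ultimately show "y \<in> {k<..<t}" using i unfolding B_def by auto
    qed
    then have "card (p ` B) \<le> card {k<..<t}" by (intro card_mono) auto
    finally show ?thesis by simp
  qed
  finally have I1: "II a (Suc n) p \<le> card X + (t - k) + (t - k - 1)" by simp
  define B2 where "B2 = {i\<in>{a..<k}. k < p i}"
  have "X \<union> ((\<lambda>i. (i,k)) ` B2) \<subseteq> {(i,j). i \<in> {a..<a+n} \<and> j \<in> {a..<a+n} \<and> i < j \<and> q j < q i}"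
  proof
    fix x assume "x \<in> X \<union> ((\<lambda>i. (i,k)) ` B2)"
    then show "x \<in> {(i,j). i \<in> {a..<a+n} \<and> j \<in> {a..<a+n} \<and> i < j \<and> q j < q i}"
    proof
      assume "x \<in> X" then show ?thesis unfolding X_def R_def S using qo by auto
    next
      assume "x \<in> (\<lambda>i. (i,k)) ` B2"
      then obtain i where i: "i \<in> B2" "x = (i,k)" by auto
      then show ?thesis unfolding B2_def S using qo qk kt2 k1 by auto
    qed
  qed
  then have "card (X \<union> ((\<lambda>i. (i,k)) ` B2)) \<le> II a n q"
    unfolding II_def by (intro card_mono finite_pairs)
  moreover have "card (X \<union> ((\<lambda>i. (i,k)) ` B2)) = card X + card B2"
  proof -
    have "card (X \<union> ((\<lambda>i. (i,k)) ` B2)) = card X + card ((\<lambda>i. (i,k)) ` B2)"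
      by (intro card_Un_disjoint finX finite_imageI) (auto simp: B2_def X_def R_def)
    also have "card ((\<lambda>i. (i,k)) ` B2) = card B2" by (rule card_image) (auto simp: inj_on_def)
    finally show ?thesis .
  qed
  ultimately have I2: "card X + card B2 \<le> II a n q" by simp
  show "int (II a (Suc n) p) + int (CC a (Suc n) p) + int (card {i\<in>{a..<k}. k < p i}) + DD a n q
       \<le> DD a (Suc n) p + int (II a n q) + int (CC a n q)"
  proof -
    have N: "II a (Suc n) p + 1 \<le> card X + 2*(t-k)" using I1 kt2 by arith
    have e: "int (2*(t-k)) = 2*(int t - int k)" using kt2 by (simp add: of_nat_diff)
    have "int (II a (Suc n) p + 1) \<le> int (card X + 2*(t-k))" using N by (simp only: of_nat_le_iff)
    then have Z: "int (II a (Suc n) p) + 1 \<le> int (card X) + 2*(int t - int k)" using e by simp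
    have I2': "int (card X) + int (card B2) \<le> int (II a n q)" using I2 by linarith
    show ?thesis using Z I2' C D unfolding B2_def by linarith
  qed
qed

lemma nonneg:
  "invo p \<Longrightarrow> supp p {a..<a+n} \<Longrightarrow> int (II a n p) + int (CC a n p) \<le> DD a n p"
proof (induction n arbitrary: p)
  case 0
  have "II a 0 p = 0" unfolding II_def by simp
  moreover have "CC a 0 p = 0" unfolding CC_def by simp
  moreover have "DD a 0 p = 0" unfolding DD_def by simp
  ultimately show ?case by simp
next
  case (Suc n)
  have sp: "supp p {a..<Suc (a+n)}" using Suc.prems by simp
  show ?case
  proof (cases "p (a+n) = a+n")
    case True
    note F = fix_lemma[OF Suc.prems(1) sp True]
    show ?thesis using Suc.IH[OF Suc.prems(1) F(1)] F by simp
  next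
    case False
    note St = step_lemma[OF Suc.prems(1) sp False]
    have "int (II a n (p(p (a+n) := p (a+n), a+n := a+n))) + int (CC a n (p(p (a+n) := p (a+n), a+n := a+n)))
      \<le> DD a n (p(p (a+n) := p (a+n), a+n := a+n))" by (rule Suc.IH[OF St(4) St(5)])
    then show ?thesis using St(6) by linarith
  qed
qed

lemma key:
  assumes ok: "OK a (Suc (Suc n)) p"
  shows "p (a + Suc n) = a + Suc n \<or> p (a + Suc n) = a"
proof (rule ccontr)
  assume H: "\<not> (p (a + Suc n) = a + Suc n \<or> p (a + Suc n) = a)"
  have iv: "invo p" and sp: "supp p {a..<Suc (a + Suc n)}" and av: "AV a (Suc (Suc n)) p"
    and sh: "DD a (Suc (Suc n)) p = int (II a (Suc (Suc n)) p) + int (CC a (Suc (Suc n)) p)"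
    using ok unfolding OK_def by auto
  have pt: "p (a + Suc n) \<noteq> a + Suc n" using H by simp
  note St = step_lemma[OF iv sp pt]
  define t where "t = a + Suc n"
  define k where "k = p t"
  have ak: "a < k" using St(1) H unfolding k_def t_def by auto
  have kt: "k < t" "p k = t" using St(2,3) unfolding k_def t_def by auto
  have "p a \<noteq> k"
  proof
    assume "p a = k"
    then have "a = p k" using invoD[OF iv, of a] by simp
    then show False using kt ak by simp
  qed
  moreover have "\<not> p a < k"
  proof
    assume "p a < k"
    then have "a \<le> a \<and> a < k \<and> k < t \<and> t < a + Suc (Suc n) \<and> p a < p t \<and> p t < p k"
      using ak kt unfolding k_def t_def by auto
    then show False using av unfolding AV_def by blast
  qed
  ultimately have am: "a \<in> {i\<in>{a..<k}. k < p i}" using ak by auto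
  have fin: "finite {i\<in>{a..<k}. k < p i}" by simp
  have "0 < card {i\<in>{a..<k}. k < p i}" unfolding card_gt_0_iff using fin am by blast
  then have c1: "1 \<le> card {i\<in>{a..<k}. k < p i}" by simp
  have "int (II a (Suc n) (p(k := k, t := t))) + int (CC a (Suc n) (p(k := k, t := t)))
      \<le> DD a (Suc n) (p(k := k, t := t))"
    using nonneg[OF St(4) St(5)] unfolding k_def t_def by simp
  moreover have "int (II a (Suc (Suc n)) p) + int (CC a (Suc (Suc n)) p) + int (card {i\<in>{a..<k}. k < p i}) + DD a (Suc n) (p(k := k, t := t))
       \<le> DD a (Suc (Suc n)) p + int (II a (Suc n) (p(k := k, t := t))) + int (CC a (Suc n) (p(k := k, t := t)))"
    using St(6) unfolding k_def t_def by simp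
  ultimately show False using c1 sh by linarith
qed

lemma wrap_lemma:
  assumes iv: "invo q" and sp: "supp q {Suc a..<Suc a + n}"
  shows "invo (q(a := a + Suc n, a + Suc n := a))"
    "supp (q(a := a + Suc n, a + Suc n := a)) {a..<a + Suc (Suc n)}"
    "DD a (Suc (Suc n)) (q(a := a + Suc n, a + Suc n := a)) = DD (Suc a) n q + 2 * int (Suc n)"
    "II a (Suc (Suc n)) (q(a := a + Suc n, a + Suc n := a)) = II (Suc a) n q + (2*n+1)"
    "CC a (Suc (Suc n)) (q(a := a + Suc n, a + Suc n := a)) = CC (Suc a) n q + 1"
    "AV a (Suc (Suc n)) (q(a := a + Suc n, a + Suc n := a)) \<longleftrightarrow> AV (Suc a) n q"
proof -
  define s where "s = a + Suc n"
  define p where "p = q(a := s, s := a)"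
  define M where "M = {Suc a..<Suc a + n}"
  have Miff: "\<And>i. i \<in> M \<longleftrightarrow> a < i \<and> i < s" unfolding M_def s_def by auto
  have as: "a < s" unfolding s_def by simp
  have pa: "p a = s" and ps: "p s = a" unfolding p_def using as by auto
  have pM: "\<And>i. i \<noteq> a \<Longrightarrow> i \<noteq> s \<Longrightarrow> p i = q i" unfolding p_def by auto
  have sp': "supp q M" using sp unfolding M_def .
  have qM: "\<And>i. i \<in> M \<Longrightarrow> q i \<in> M" using inS[OF iv sp'] by blast
  have qout: "\<And>i. i \<notin> M \<Longrightarrow> q i = i" using sp' unfolding supp_def by blast
  have qne: "\<And>x. x \<noteq> a \<Longrightarrow> x \<noteq> s \<Longrightarrow> q x \<noteq> a \<and> q x \<noteq> s"
  proof -
    fix x assume "x \<noteq> a" "x \<noteq> s"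
    show "q x \<noteq> a \<and> q x \<noteq> s"
    proof (cases "x \<in> M")
      case True then show ?thesis using qM[OF True] Miff by auto
    next
      case False then show ?thesis using qout[OF False] \<open>x \<noteq> a\<close> \<open>x \<noteq> s\<close> by simp
    qed
  qed
  show "invo (q(a := a + Suc n, a + Suc n := a))" unfolding s_def[symmetric] p_def[symmetric] invo_def
  proof
    fix x show "p (p x) = x"
    proof (cases "x = a \<or> x = s")
      case True then show ?thesis using pa ps by auto
    next
      case False
      then have "p x = q x" using pM by auto
      moreover have "p (q x) = q (q x)" using qne False pM by auto
      ultimately show ?thesis using invoD[OF iv] by simp
    qed
  qed
  have U: "{a..<a + Suc (Suc n)} = insert a (insert s M)" unfolding M_def s_def by auto
  show "supp (q(a := a + Suc n, a + Suc n := a)) {a..<a + Suc (Suc n)}"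
    unfolding s_def[symmetric] p_def[symmetric] U supp_def
  proof (intro allI impI)
    fix x assume "x \<notin> insert a (insert s M)"
    then show "p x = x" using pM qout by auto
  qed
  have aM: "a \<notin> insert s M" using Miff as by auto
  have sM: "s \<notin> M" using Miff by auto
  have "DD a (Suc (Suc n)) p = \<bar>int (p a) - int a\<bar> + (\<bar>int (p s) - int s\<bar> + (\<Sum>i\<in>M. \<bar>int (p i) - int i\<bar>))"
    unfolding DD_def U using aM sM by (simp add: sum.insert M_def)
  also have "(\<Sum>i\<in>M. \<bar>int (p i) - int i\<bar>) = (\<Sum>i\<in>M. \<bar>int (q i) - int i\<bar>)"
    by (rule sum.cong) (auto simp: pM Miff)
  finally show "DD a (Suc (Suc n)) (q(a := a + Suc n, a + Suc n := a)) = DD (Suc a) n q + 2 * int (Suc n)"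
    unfolding s_def[symmetric] p_def[symmetric] DD_def M_def[symmetric] using pa ps as unfolding s_def by simp
  have "{i\<in>{a..<a + Suc (Suc n)}. p i < i} = insert s {i\<in>M. q i < i}"
    unfolding U
  proof (rule set_eqI)
    fix i show "i \<in> {i \<in> insert a (insert s M). p i < i} \<longleftrightarrow> i \<in> insert s {i \<in> M. q i < i}"
      using pa ps pM Miff as by (cases "i = a"; cases "i = s") auto
  qed
  then have "CC a (Suc (Suc n)) p = card (insert s {i\<in>M. q i < i})" unfolding CC_def by simp
  also have "\<dots> = Suc (card {i\<in>M. q i < i})" using sM by (intro card_insert_disjoint) (auto simp: M_def)
  finally have X: "CC a (Suc (Suc n)) p = CC (Suc a) n q + 1" unfolding CC_def M_def by simp
  then show "CC a (Suc (Suc n)) (q(a := a + Suc n, a + Suc n := a)) = CC (Suc a) n q + 1"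
    unfolding p_def s_def .
  define IQ where "IQ = {(i,j). i \<in> M \<and> j \<in> M \<and> i < j \<and> q j < q i}"
  have IE: "{(i,j). i \<in> {a..<a + Suc (Suc n)} \<and> j \<in> {a..<a + Suc (Suc n)} \<and> i < j \<and> p j < p i}
     = IQ \<union> (Pair a ` {a<..s} \<union> (\<lambda>i. (i,s)) ` M)"
  proof (rule set_eqI)
    fix x :: "nat \<times> nat"
    obtain i j where x: "x = (i,j)" by fastforce
    show "x \<in> {(i,j). i \<in> {a..<a + Suc (Suc n)} \<and> j \<in> {a..<a + Suc (Suc n)} \<and> i < j \<and> p j < p i}
      \<longleftrightarrow> x \<in> IQ \<union> (Pair a ` {a<..s} \<union> (\<lambda>i. (i,s)) ` M)"
    proof
      assume "x \<in> {(i,j). i \<in> {a..<a + Suc (Suc n)} \<and> j \<in> {a..<a + Suc (Suc n)} \<and> i < j \<and> p j < p i}"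
      then have h: "a \<le> i" "j \<le> s" "i < j" "p j < p i"
        unfolding x s_def by auto
      show "x \<in> IQ \<union> (Pair a ` {a<..s} \<union> (\<lambda>i. (i,s)) ` M)"
      proof (cases "i = a")
        case True
        then have "j \<in> {a<..s}" using h by auto
        then show ?thesis unfolding x True by blast
      next
        case False
        then have iM: "i \<in> M" unfolding Miff using h by linarith
        show ?thesis
        proof (cases "j = s")
          case True then show ?thesis unfolding x using iM by blast
        next
          case F2: False
          then have jM: "j \<in> M" unfolding Miff using h iM Miff by linarith
          have "p i = q i" "p j = q j" using pM jM iM Miff by auto
          then have "q j < q i" using h by simp
          then have "x \<in> IQ" unfolding x IQ_def using iM jM h by simp
          then show ?thesis by blast
        qed
      qed
    next
      assume "x \<in> IQ \<union> (Pair a ` {a<..s} \<union> (\<lambda>i. (i,s)) ` M)"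
      then consider "x \<in> IQ" | "x \<in> Pair a ` {a<..s}" | "x \<in> (\<lambda>i. (i,s)) ` M" by blast
      then show "x \<in> {(i,j). i \<in> {a..<a + Suc (Suc n)} \<and> j \<in> {a..<a + Suc (Suc n)} \<and> i < j \<and> p j < p i}"
      proof cases
        case 1
        then have h: "i \<in> M" "j \<in> M" "i < j" "q j < q i" unfolding x IQ_def by simp_all
        have "p i = q i" "p j = q j" using h Miff pM by auto
        then show ?thesis unfolding x U using h by simp
      next
        case 2
        then have h: "i = a" "a < j" "j \<le> s" unfolding x by auto
        have "p j < s"
        proof (cases "j = s")
          case True then show ?thesis using ps as by simp
        next
          case False
          then have "j \<in> M" using h Miff by auto
          then have "p j = q j" "q j \<in> M" using qM pM Miff False by auto
          then show ?thesis using Miff by simp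
        qed
        then have "p j < p a" using pa by simp
        moreover have "j \<in> {a..<a + Suc (Suc n)}" "a \<in> {a..<a + Suc (Suc n)}" using h unfolding s_def by auto
        ultimately show ?thesis unfolding x h(1) using h by simp
      next
        case 3
        then have h: "j = s" "i \<in> M" unfolding x by auto
        have "p i = q i" "q i \<in> M" using h qM pM Miff by auto
        then have "a < p i" using Miff by simp
        then show ?thesis unfolding x U using h ps Miff by simp
      qed
    qed
  qed
  have finM: "finite M" unfolding M_def by simp
  have finIQ: "finite IQ" unfolding IQ_def by (rule finite_subset[of _ "M \<times> M"]) (auto simp: finM)
  have "card (IQ \<union> (Pair a ` {a<..s} \<union> (\<lambda>i. (i,s)) ` M)) = card IQ + (card (Pair a ` {a<..s}) + card ((\<lambda>i. (i,s)) ` M))"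
  proof -
    have d1: "Pair a ` {a<..s} \<inter> (\<lambda>i. (i,s)) ` M = {}" using Miff by auto
    have d2: "IQ \<inter> (Pair a ` {a<..s} \<union> (\<lambda>i. (i,s)) ` M) = {}" unfolding IQ_def using Miff by auto
    show ?thesis
      using card_Un_disjoint[OF finIQ _ d2] card_Un_disjoint[OF _ _ d1] finM by simp
  qed
  also have "card (Pair a ` {a<..s}) = Suc n" by (subst card_image) (auto simp: inj_on_def s_def)
  also have "card ((\<lambda>i. (i,s)) ` M) = n" by (subst card_image) (auto simp: inj_on_def M_def)
  finally have "card {(i,j). i \<in> {a..<a + Suc (Suc n)} \<and> j \<in> {a..<a + Suc (Suc n)} \<and> i < j \<and> p j < p i}
     = card IQ + (Suc n + n)" unfolding IE .
  then show "II a (Suc (Suc n)) (q(a := a + Suc n, a + Suc n := a)) = II (Suc a) n q + (2*n+1)"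
    unfolding s_def[symmetric] p_def[symmetric] II_def IQ_def M_def by simp
  have AVe: "AV a (Suc (Suc n)) p \<longleftrightarrow> AV (Suc a) n q"
  proof
    assume A: "AV a (Suc (Suc n)) p"
    show "AV (Suc a) n q" unfolding AV_def
    proof clarify
      fix i j k assume h: "Suc a \<le> i" "i < j" "j < k" "k < Suc a + n" "q i < q k" "q k < q j"
      have "i \<in> M" "j \<in> M" "k \<in> M" using h unfolding M_def by auto
      then have "p i = q i" "p j = q j" "p k = q k" using pM Miff by auto
      then have "a \<le> i \<and> i < j \<and> j < k \<and> k < a + Suc (Suc n) \<and> p i < p k \<and> p k < p j" using h by simp
      then show False using A unfolding AV_def by blast
    qed
  next
    assume A: "AV (Suc a) n q"
    show "AV a (Suc (Suc n)) p" unfolding AV_def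
    proof clarify
      fix i j k assume h: "a \<le> i" "i < j" "j < k" "k < a + Suc (Suc n)" "p i < p k" "p k < p j"
      have kU: "k \<in> insert a (insert s M)" "j \<in> insert a (insert s M)" "i \<in> insert a (insert s M)"
        unfolding U[symmetric] using h by auto
      have rng: "\<And>x. x \<in> insert a (insert s M) \<Longrightarrow> a \<le> p x \<and> p x \<le> s"
      proof -
        fix x assume "x \<in> insert a (insert s M)"
        then consider "x = a" | "x = s" | "x \<in> M" by blast
        then show "a \<le> p x \<and> p x \<le> s"
        proof cases
          case 3
          then have "p x = q x" "q x \<in> M" using qM pM Miff by auto
          then show ?thesis using Miff by simp
        qed (use pa ps as in auto)
      qed
      have "i \<noteq> a" using h pa rng[OF kU(1)] by auto
      moreover have "k \<noteq> s" using h ps rng[OF kU(3)] by auto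
      ultimately have "i \<in> M" "j \<in> M" "k \<in> M" using kU h Miff by auto
      then have "p i = q i" "p j = q j" "p k = q k" "Suc a \<le> i" "k < Suc a + n" using pM Miff unfolding M_def by auto
      then have "Suc a \<le> i \<and> i < j \<and> j < k \<and> k < Suc a + n \<and> q i < q k \<and> q k < q j" using h by simp
      then show False using A unfolding AV_def by blast
    qed
  qed
  then show "AV a (Suc (Suc n)) (q(a := a + Suc n, a + Suc n := a)) \<longleftrightarrow> AV (Suc a) n q"
    unfolding s_def[symmetric] p_def[symmetric] .
qed

lemma OK_Suc_iff:
  assumes "p (a+n) = a+n"
  shows "OK a (Suc n) p \<longleftrightarrow> OK a n p"
proof
  assume ok: "OK a (Suc n) p"
  then have iv: "invo p" and sp: "supp p {a..<Suc (a+n)}" unfolding OK_def by auto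
  note F = fix_lemma[OF iv sp assms]
  show "OK a n p" using ok F unfolding OK_def by simp
next
  assume ok: "OK a n p"
  then have iv: "invo p" and sp0: "supp p {a..<a+n}" unfolding OK_def by auto
  have sp: "supp p {a..<Suc (a+n)}" using sp0 unfolding supp_def by auto
  note F = fix_lemma[OF iv sp assms]
  show "OK a (Suc n) p" using ok F sp unfolding OK_def by simp
qed

lemma OK_fixlast: "OK a n p \<Longrightarrow> p (a+n) = a+n"
  unfolding OK_def supp_def by auto

lemma OK_wrap: "OK (Suc a) n q \<Longrightarrow> OK a (Suc (Suc n)) (q(a := a + Suc n, a + Suc n := a))"
proof -
  assume ok: "OK (Suc a) n q"
  then have iv: "invo q" and sp: "supp q {Suc a..<Suc a + n}" unfolding OK_def by auto
  note W = wrap_lemma[OF iv sp]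
  show ?thesis using ok W unfolding OK_def by simp
qed

lemma OK_unwrap:
  assumes ok: "OK a (Suc (Suc n)) p" and ps: "p (a + Suc n) = a"
  shows "OK (Suc a) n (p(a := a, a + Suc n := a + Suc n))"
    "p = (p(a := a, a + Suc n := a + Suc n))(a := a + Suc n, a + Suc n := a)"
proof -
  define s where "s = a + Suc n"
  define q where "q = p(a := a, s := s)"
  have iv: "invo p" and sp: "supp p {a..<a + Suc (Suc n)}" using ok unfolding OK_def by auto
  have as: "a < s" unfolding s_def by simp
  have pa: "p a = s" using invoD[OF iv, of s] ps unfolding s_def by simp
  have ps': "p s = a" using ps unfolding s_def .
  have ne: "\<And>x. x \<noteq> a \<Longrightarrow> x \<noteq> s \<Longrightarrow> p x \<noteq> a \<and> p x \<noteq> s"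
    using invoD[OF iv] pa ps' by metis
  have qo: "\<And>x. x \<noteq> a \<Longrightarrow> x \<noteq> s \<Longrightarrow> q x = p x" unfolding q_def by simp
  have qa: "q a = a" "q s = s" unfolding q_def using as by auto
  have ivq: "invo q" unfolding invo_def
  proof
    fix x show "q (q x) = x"
    proof (cases "x = a \<or> x = s")
      case True then show ?thesis using qa by auto
    next
      case False
      then have "q x = p x" using qo by auto
      moreover have "q (p x) = p (p x)" using ne False qo by auto
      ultimately show ?thesis using invoD[OF iv] by simp
    qed
  qed
  have spq: "supp q {Suc a..<Suc a + n}" unfolding supp_def
  proof (intro allI impI)
    fix x assume x: "x \<notin> {Suc a..<Suc a + n}"
    show "q x = x"
    proof (cases "x = a \<or> x = s")
      case True then show ?thesis using qa by auto
    next
      case False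
      then have "x \<notin> {a..<a + Suc (Suc n)}" using x unfolding s_def by auto
      then show ?thesis using sp False qo unfolding supp_def by auto
    qed
  qed
  have eq: "p = q(a := s, s := a)"
  proof
    fix x show "p x = (q(a := s, s := a)) x"
      using pa ps' qo by (cases "x = a"; cases "x = s") auto
  qed
  then show "p = (p(a := a, a + Suc n := a + Suc n))(a := a + Suc n, a + Suc n := a)"
    unfolding q_def s_def .
  note W = wrap_lemma[OF ivq spq]
  have "OK a (Suc (Suc n)) (q(a := a + Suc n, a + Suc n := a))" using ok eq unfolding s_def by simp
  then show "OK (Suc a) n (p(a := a, a + Suc n := a + Suc n))"
    using W ivq spq unfolding OK_def q_def s_def by simp
qed

definition AS :: "nat \<Rightarrow> nat \<Rightarrow> (nat \<Rightarrow> nat) set" where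
  "AS a n = {p. OK a n p}"

lemma invo_permutes: "invo p \<Longrightarrow> supp p S \<Longrightarrow> p permutes S"
  unfolding permutes_def supp_def invo_def by metis

lemma AS_finite: "finite (AS a n)"
proof (rule finite_subset[OF _ finite_permutations[of "{a..<a+n}"]])
  show "AS a n \<subseteq> {p. p permutes {a..<a+n}}" unfolding AS_def OK_def using invo_permutes by blast
qed simp

lemma AS_0: "AS a 0 = {id}"
proof -
  have "\<And>p. OK a 0 p \<Longrightarrow> p = id" unfolding OK_def supp_def by auto
  then show ?thesis unfolding AS_def using OK_id by auto
qed

lemma AS_1: "AS a (Suc 0) = {id}"
proof -
  have "\<And>p. OK a (Suc 0) p \<Longrightarrow> p = id"
  proof -
    fix p assume "OK a (Suc 0) p"
    then have "invo p" "supp p {a..<a + Suc 0}" unfolding OK_def by auto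
    then have "p a \<in> {a..<a + Suc 0}" "\<And>x. x \<noteq> a \<Longrightarrow> p x = x"
      using inS[of p "{a..<a + Suc 0}" a] unfolding supp_def by auto
    then show "p = id"
    proof -
      assume h: "p a \<in> {a..<a + Suc 0}" "\<And>x. x \<noteq> a \<Longrightarrow> p x = x"
      show "p = id"
      proof
        fix x show "p x = id x" using h by (cases "x = a") auto
      qed
    qed
  qed
  then show ?thesis unfolding AS_def using OK_id by auto
qed

lemma AS_split: "AS a (Suc (Suc n)) = AS a (Suc n) \<union> (\<lambda>q. q(a := a + Suc n, a + Suc n := a)) ` AS (Suc a) n"
proof (rule set_eqI)
  fix p show "p \<in> AS a (Suc (Suc n)) \<longleftrightarrow> p \<in> AS a (Suc n) \<union> (\<lambda>q. q(a := a + Suc n, a + Suc n := a)) ` AS (Suc a) n"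
  proof
    assume "p \<in> AS a (Suc (Suc n))"
    then have ok: "OK a (Suc (Suc n)) p" unfolding AS_def by simp
    from key[OF ok] show "p \<in> AS a (Suc n) \<union> (\<lambda>q. q(a := a + Suc n, a + Suc n := a)) ` AS (Suc a) n"
    proof
      assume "p (a + Suc n) = a + Suc n"
      then have "OK a (Suc n) p" using OK_Suc_iff[of p a "Suc n"] ok by simp
      then show ?thesis unfolding AS_def by simp
    next
      assume ps: "p (a + Suc n) = a"
      note U = OK_unwrap[OF ok ps]
      show ?thesis unfolding AS_def using U by blast
    qed
  next
    assume "p \<in> AS a (Suc n) \<union> (\<lambda>q. q(a := a + Suc n, a + Suc n := a)) ` AS (Suc a) n"
    then show "p \<in> AS a (Suc (Suc n))"
    proof
      assume "p \<in> AS a (Suc n)"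
      then have ok: "OK a (Suc n) p" unfolding AS_def by simp
      have "p (a + Suc n) = a + Suc n" using OK_fixlast[OF ok] by simp
      then show ?thesis using OK_Suc_iff[of p a "Suc n"] ok unfolding AS_def by simp
    next
      assume "p \<in> (\<lambda>q. q(a := a + Suc n, a + Suc n := a)) ` AS (Suc a) n"
      then show ?thesis unfolding AS_def using OK_wrap by auto
    qed
  qed
qed

lemma AS_finite_card: "card (AS a n) = fib (Suc n)"
proof (induction n arbitrary: a rule: nat_less_induct)
  case (1 n)
  show ?case
  proof (cases n)
    case 0 then show ?thesis by (simp add: AS_0)
  next
    case (Suc m)
    show ?thesis
    proof (cases m)
      case 0 then show ?thesis using Suc by (simp add: AS_1)
    next
      case (Suc k)
      have nk: "n = Suc (Suc k)" using Suc \<open>n = Suc m\<close> by simp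
      have disj: "AS a (Suc k) \<inter> (\<lambda>q. q(a := a + Suc k, a + Suc k := a)) ` AS (Suc a) k = {}"
      proof -
        have "\<And>p. p \<in> AS a (Suc k) \<Longrightarrow> p (a + Suc k) = a + Suc k"
        proof -
          fix p assume "p \<in> AS a (Suc k)"
          then have "OK a (Suc k) p" unfolding AS_def by simp
          from OK_fixlast[OF this] show "p (a + Suc k) = a + Suc k" .
        qed
        moreover have "\<And>q. (q(a := a + Suc k, a + Suc k := a)) (a + Suc k) = a" by simp
        ultimately show ?thesis by fastforce
      qed
      have inj: "inj_on (\<lambda>q. q(a := a + Suc k, a + Suc k := a)) (AS (Suc a) k)"
      proof (rule inj_onI)
        fix q1 q2 assume q: "q1 \<in> AS (Suc a) k" "q2 \<in> AS (Suc a) k"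
          and e: "q1(a := a + Suc k, a + Suc k := a) = q2(a := a + Suc k, a + Suc k := a)"
        have s: "supp q1 {Suc a..<Suc a + k}" "supp q2 {Suc a..<Suc a + k}" using q unfolding AS_def OK_def by auto
        show "q1 = q2"
        proof
          fix x show "q1 x = q2 x"
          proof (cases "x = a \<or> x = a + Suc k")
            case True
            then have "x \<notin> {Suc a..<Suc a + k}" by auto
            then show ?thesis using s unfolding supp_def by auto
          next
            case False
            then show ?thesis using fun_cong[OF e, of x] by auto
          qed
        qed
      qed
      have fin1: "finite (AS a (Suc k))" by (rule AS_finite)
      have fin2: "finite (AS (Suc a) k)" by (rule AS_finite)
      have "card (AS a n) = card (AS a (Suc k)) + card (AS (Suc a) k)"
        unfolding nk AS_split using card_Un_disjoint[OF fin1 finite_imageI[OF fin2] disj] card_image[OF inj] by simp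
      also have "\<dots> = fib (Suc (Suc k)) + fib (Suc k)" using "1.IH" nk by simp
      finally show ?thesis using nk by simp
    qed
  qed
qed

lemma pow_invo: "invo p \<Longrightarrow> (p ^^ k) i = (if even k then i else p i)"
  by (induction k) (auto simp: invoD)

lemma cyc_invo: "invo p \<Longrightarrow> cyc_of p i = {i, p i}"
proof
  assume iv: "invo p"
  show "cyc_of p i \<subseteq> {i, p i}" unfolding cyc_of_def using pow_invo[OF iv] by auto
  have "(p ^^ 0) i = i" "(p ^^ 1) i = p i" by auto
  then show "{i, p i} \<subseteq> cyc_of p i" unfolding cyc_of_def by blast
qed

lemma numcyc:
  assumes iv: "invo p" and sp: "supp p {1..n}"
  shows "num_cycles n p + card {i\<in>{1..n}. p i < i} = n"
proof -
  define L where "L = {i\<in>{1..n}. i \<le> p i}"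
  define G where "G = {i\<in>{1..n}. p i < i}"
  have "num_cycles n p = card ((\<lambda>i. {i, p i}) ` {1..n})"
    unfolding num_cycles_def using cyc_invo[OF iv] by simp
  also have "(\<lambda>i. {i, p i}) ` {1..n} = (\<lambda>i. {i, p i}) ` L"
  proof
    show "(\<lambda>i. {i, p i}) ` L \<subseteq> (\<lambda>i. {i, p i}) ` {1..n}" unfolding L_def by auto
    show "(\<lambda>i. {i, p i}) ` {1..n} \<subseteq> (\<lambda>i. {i, p i}) ` L"
    proof
      fix y assume "y \<in> (\<lambda>i. {i, p i}) ` {1..n}"
      then obtain i where i: "i \<in> {1..n}" "y = {i, p i}" by auto
      show "y \<in> (\<lambda>i. {i, p i}) ` L"
      proof (cases "i \<le> p i")
        case True then show ?thesis using i unfolding L_def by auto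
      next
        case False
        have "p i \<in> {1..n}" using inS[OF iv sp i(1)] .
        moreover have "p (p i) = i" using invoD[OF iv] .
        ultimately have "p i \<in> L" "{p i, p (p i)} = y" using False i unfolding L_def by auto
        then show ?thesis by blast
      qed
    qed
  qed
  also have "card ((\<lambda>i. {i, p i}) ` L) = card L"
  proof (rule card_image, rule inj_onI)
    fix i j assume ij: "i \<in> L" "j \<in> L" "{i, p i} = {j, p j}"
    show "i = j"
    proof (rule ccontr)
      assume "i \<noteq> j"
      then have "i = p j" "j = p i" using ij(3) by (auto simp: doubleton_eq_iff)
      then show False using ij(1,2) \<open>i \<noteq> j\<close> unfolding L_def by auto
    qed
  qed
  also have "card L + card G = n"
  proof -
    have "L \<union> G = {1..n}" "L \<inter> G = {}" unfolding L_def G_def by auto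
    then show ?thesis using card_Un_disjoint[of L G] unfolding L_def G_def by simp
  qed
  finally show ?thesis unfolding G_def by simp
qed

theorem theorem3p6:
  fixes n :: nat
  assumes "n \<ge> 1"
  shows "card {p. p permutes {1..n} \<and> involution p \<and> avoids_132 n p \<and> shallow n p} = fib (n + 1)"
proof -
  have I1: "{1..<1+n} = {1..n}" by auto
  have "{p. p permutes {1..n} \<and> involution p \<and> avoids_132 n p \<and> shallow n p} = AS 1 n"
  proof (rule set_eqI)
    fix p
    show "p \<in> {p. p permutes {1..n} \<and> involution p \<and> avoids_132 n p \<and> shallow n p} \<longleftrightarrow> p \<in> AS 1 n"
    proof (cases "invo p")
      case False
      then have "\<not> involution p" unfolding involution_def invo_def by (auto simp: fun_eq_iff)
      then show ?thesis using False unfolding AS_def OK_def by auto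
    next
      case iv: True
      have inv: "involution p" using iv unfolding involution_def invo_def by (auto simp: fun_eq_iff)
      have pe: "p permutes {1..n} \<longleftrightarrow> supp p {1..<1+n}"
        unfolding I1 using invo_permutes[OF iv] unfolding permutes_def supp_def by blast
      have av: "avoids_132 n p \<longleftrightarrow> AV 1 n p"
        unfolding avoids_132_def AV_def by (metis Suc_eq_plus1_left less_Suc_eq_le)
      have td: "total_disp n p = DD 1 n p" unfolding total_disp_def DD_def I1 ..
      have ti: "inversions n p = II 1 n p" unfolding inversions_def II_def I1 ..
      show ?thesis
      proof (cases "supp p {1..<1+n}")
        case False then show ?thesis using pe unfolding AS_def OK_def by auto
      next
        case sp: True
        have nc: "num_cycles n p + CC 1 n p = n" using numcyc[OF iv] sp unfolding CC_def I1 by simp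
        have sh: "shallow n p \<longleftrightarrow> DD 1 n p = int (II 1 n p) + int (CC 1 n p)"
          unfolding shallow_def reflength_def td ti using nc by linarith
        show ?thesis unfolding AS_def OK_def using iv inv pe sp av sh by auto
      qed
    qed
  qed
  then show ?thesis using AS_finite_card[of 1 n] by simp
qed

end
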